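(* Let $g\sim\mathcal N(0,1)$ and, for nonnegative integers $a,b$, let $I(a,b)=\mathbb E[(g^2-1)^ag^{2b}]$. Then: (i) $I(0,0)=1$, $I(1,0)=0$ and $I(0,b)=(2b-1)!!$. Moreover $I(a,0)=2(a-1)\bigl(I(a-1,0)+I(a-2,0)\bigr)$ for $a\ge2$, and $I(a,b)=2a\,I(a-1,b)+(2b-1)\,I(a,b-1)$ for $a\ge1$, $b\ge1$. (ii) If either $b=0$ and $a\ge2$, or $b\ge1$ and $a\ge0$, then $\mathbb E[g^{2a+2b}]\le2^a\,\mathbb E[(g^2-1)^ag^{2b}]$. *)

theory Defs
  imports "HOL-Probability.Probability"
begin

definition gauss_expect :: "(real \<Rightarrow> real) \<Rightarrow> real" where
  "gauss_expect f = integral\<^sup>L (density lborel std_normal_density) f"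

definition I_gauss :: "nat \<Rightarrow> nat \<Rightarrow> real" where
  "I_gauss a b = gauss_expect (\<lambda>g. (g\<^sup>2 - 1) ^ a * g ^ (2 * b))"

fun dfact :: "nat \<Rightarrow> nat" where
  "dfact 0 = 1"
| "dfact (Suc 0) = 1"
| "dfact (Suc (Suc n)) = Suc (Suc n) * dfact n"

end

theory Submission
  imports Defs
begin

definition J :: "nat \<Rightarrow> nat \<Rightarrow> real" where
  "J a b = integral\<^sup>L lborel (\<lambda>x. std_normal_density x * ((x\<^sup>2 - 1) ^ a * x ^ (2 * b)))"

lemma I_J: "I_gauss a b = J a b"
  unfolding I_gauss_def gauss_expect_def J_def
  by (subst integral_density) (auto simp: std_normal_density_def)

lemma ge_moment: "gauss_expect (\<lambda>g. g ^ (2 * k)) = fact (2 * k) / (2^k * fact k)"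
  unfolding gauss_expect_def
  by (subst integral_density) (auto simp: std_normal_density_def[symmetric] integral_std_normal_moment_even)

lemma J_int: "integrable lborel (\<lambda>x. std_normal_density x * ((x\<^sup>2 - 1) ^ a * x ^ (2 * b)))"
proof (induction a arbitrary: b)
  case 0
  then show ?case using integrable_std_normal_moment[of "2*b"] by simp
next
  case (Suc a)
  have "integrable lborel (\<lambda>x. std_normal_density x * ((x\<^sup>2 - 1) ^ a * x ^ (2 * Suc b))
      - std_normal_density x * ((x\<^sup>2 - 1) ^ a * x ^ (2 * b)))"
    by (rule Bochner_Integration.integrable_diff[OF Suc.IH Suc.IH])
  moreover have "\<And>x. std_normal_density x * ((x\<^sup>2 - 1) ^ a * x ^ (2 * Suc b))
      - std_normal_density x * ((x\<^sup>2 - 1) ^ a * x ^ (2 * b)) = 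
     std_normal_density x * ((x\<^sup>2 - 1) ^ Suc a * x ^ (2 * b))"
    by (simp add: algebra_simps power2_eq_square)
  ultimately show ?case by simp
qed

lemma J_lin: "J (Suc a) b = J a (Suc b) - J a b"
proof -
  have "J a (Suc b) - J a b = integral\<^sup>L lborel (\<lambda>x. std_normal_density x * ((x\<^sup>2 - 1) ^ a * x ^ (2 * Suc b))
      - std_normal_density x * ((x\<^sup>2 - 1) ^ a * x ^ (2 * b)))"
    unfolding J_def by (rule Bochner_Integration.integral_diff[symmetric, OF J_int J_int])
  also have "\<dots> = J (Suc a) b" unfolding J_def
    by (rule Bochner_Integration.integral_cong) (auto simp: algebra_simps power2_eq_square)
  finally show ?thesis by simp
qed

definition m :: "nat \<Rightarrow> real" where "m k = fact (2 * k) / (2^k * fact k)"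

lemma J0: "J 0 b = m b"
  unfolding J_def m_def using integral_std_normal_moment_even[of b] by simp

lemma m_Suc: "m (Suc k) = (2 * real k + 1) * m k"
proof -
  have h1: "fact (2 * Suc k) = (2 * real k + 2) * (2 * real k + 1) * (fact (2*k) :: real)"
    by (simp add: algebra_simps)
  have h2: "(2::real)^Suc k * fact (Suc k) = (2 * real k + 2) * (2^k * fact k)"
    by (simp add: algebra_simps)
  have "m (Suc k) = ((2*real k+2)*((2*real k+1)*fact(2*k))) / ((2*real k+2)*(2^k*fact k))"
    unfolding m_def h1 h2 by (simp only: mult.assoc)
  also have "\<dots> = ((2*real k+1)*fact(2*k)) / (2^k*fact k)"
    by (rule mult_divide_mult_cancel_left) simp
  finally show ?thesis unfolding m_def by simp
qed

lemma m_dfact: "m b = real (dfact (2 * b - 1))"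
proof (induction b)
  case 0 then show ?case by (simp add: m_def)
next
  case (Suc b)
  show ?case
  proof (cases b)
    case 0 then show ?thesis by (simp add: m_def)
  next
    case (Suc c)
    have "2 * Suc b - 1 = Suc (Suc (2 * b - 1))" using Suc by simp
    then show ?thesis using Suc.IH m_Suc[of b] Suc by (simp add: algebra_simps)
  qed
qed

lemma m_nonneg: "m k \<ge> 0" unfolding m_def by simp

lemma J_rec: "J a (Suc b) = 2 * real a * J (a - 1) (Suc b) + (2 * real b + 1) * J a b"
proof (induction a arbitrary: b)
  case 0
  then show ?case using J0 m_Suc by simp
next
  case (Suc a)
  show ?case
  proof (cases a)
    case 0
    then show ?thesis using J_lin[of 0 "Suc b"] J_lin[of 0 b] J0 m_Suc[of b] m_Suc[of "Suc b"]
      by (simp add: algebra_simps)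
  next
    case (Suc c)
    have e1: "J a (Suc (Suc b)) = 2 * real a * J c (Suc (Suc b)) + (2 * real b + 3) * J a (Suc b)"
      using Suc.IH[of "Suc b"] Suc by (simp add: algebra_simps)
    have e2: "J a (Suc b) = 2 * real a * J c (Suc b) + (2 * real b + 1) * J a b"
      using Suc.IH[of b] Suc by simp
    have e3: "J a (Suc b) = J c (Suc (Suc b)) - J c (Suc b)" using J_lin[of c "Suc b"] Suc by simp
    have e4: "J (Suc a) (Suc b) = J a (Suc (Suc b)) - J a (Suc b)" using J_lin by simp
    have e5: "J (Suc a) b = J a (Suc b) - J a b" using J_lin by simp
    show ?thesis using e1 e2 e3 e4 e5 by (simp add: algebra_simps)
  qed
qed

lemma J_rec0: "J (Suc (Suc c)) 0 = 2 * (real c + 1) * (J (Suc c) 0 + J c 0)"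
proof -
  have "J (Suc (Suc c)) 0 = J (Suc c) 1 - J (Suc c) 0" using J_lin by simp
  moreover have "J (Suc c) 1 = 2 * (real c + 1) * J c 1 + J (Suc c) 0" using J_rec[of "Suc c" 0] by simp
  moreover have "J c 1 = J (Suc c) 0 + J c 0" using J_lin[of c 0] by simp
  ultimately show ?thesis by (simp add: algebra_simps)
qed

lemma J00: "J 0 0 = 1" using J0 by (simp add: m_def)
lemma J10: "J 1 0 = 0" using J_lin[of 0 0] J0 m_Suc[of 0] by simp

lemma J_nonneg0: "J a 0 \<ge> 0"
proof (induction a rule: less_induct)
  case (less a)
  show ?case
  proof (cases a)
    case 0 then show ?thesis using J00 by simp
  next
    case (Suc c)
    show ?thesis
    proof (cases c)
      case 0 then show ?thesis using J10 Suc by simp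
    next
      case (Suc d)
      then show ?thesis using J_rec0[of d] less[of c] less[of d] \<open>a = Suc c\<close> by simp
    qed
  qed
qed

lemma J_nonneg: "J a b \<ge> 0"
proof (induction b arbitrary: a)
  case 0 then show ?case using J_nonneg0 by simp
next
  case (Suc b)
  note IHb = Suc.IH
  show ?case
  proof (induction a)
    case 0 then show ?case using J0 m_nonneg by simp
  next
    case (Suc a)
    then show ?case using J_rec[of "Suc a" b] IHb[of "Suc a"] by simp
  qed
qed

lemma ineq0: "a \<ge> 2 \<Longrightarrow> m a \<le> 2 ^ a * J a 0"
proof (induction a rule: less_induct)
  case (less a)
  then obtain c where a: "a = Suc (Suc c)" by (metis add_2_eq_Suc le_Suc_ex)
  have m1: "m 1 = 1" and m2: "m 2 = 3" and m3: "m 3 = 15"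
    using m_Suc[of 0] m_Suc[of 1] m_Suc[of 2] by (simp_all add: m_def numeral_eq_Suc)
  have J20: "J 2 0 = 2" using J_rec0[of 0] J00 J10 by (simp add: numeral_eq_Suc)
  have J30: "J 3 0 = 8" using J_rec0[of 1] J20 J10 by (simp add: numeral_eq_Suc)
  show ?case
  proof (cases "c \<ge> 2")
    case False
    then have "c = 0 \<or> c = 1" by auto
    then show ?thesis using a m2 m3 J20 J30 by (auto simp: numeral_eq_Suc)
  next
    case True
    have IH1: "m (Suc c) \<le> 2 ^ Suc c * J (Suc c) 0" using less.IH[of "Suc c"] a True by simp
    have IH2: "m c \<le> 2 ^ c * J c 0" using less.IH[of c] a True by simp
    have ma: "m a = (2 * real c + 3) * (2 * real c + 1) * m c"
      using a m_Suc[of "Suc c"] m_Suc[of c] by (simp add: algebra_simps)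
    have mc: "m (Suc c) = (2 * real c + 1) * m c" using m_Suc by simp
    have "2 ^ a * J a 0 = 4 * (real c + 1) * (2 ^ Suc c * J (Suc c) 0) + 8 * (real c + 1) * (2 ^ c * J c 0)"
      using a J_rec0[of c] by (simp add: algebra_simps)
    also have "\<dots> \<ge> 4 * (real c + 1) * m (Suc c) + 8 * (real c + 1) * m c"
      using IH1 IH2 by (intro add_mono mult_left_mono) auto
    finally have "2 ^ a * J a 0 \<ge> (4 * (real c + 1) * (2 * real c + 1) + 8 * (real c + 1)) * m c"
      using mc by (simp add: algebra_simps)
    moreover have "(2 * real c + 3) * (2 * real c + 1) * m c \<le> (4 * (real c + 1) * (2 * real c + 1) + 8 * (real c + 1)) * m c"
      using m_nonneg[of c] by (intro mult_right_mono) (auto simp: algebra_simps)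
    ultimately show ?thesis using ma by linarith
  qed
qed

lemma ineq1: "m (a + Suc b) \<le> 2 ^ a * J a (Suc b)"
proof (induction b arbitrary: a)
  case 0
  show ?case
  proof (induction a)
    case 0 then show ?case using J0 by simp
  next
    case (Suc c)
    show ?case
    proof (cases c)
      case 0
      have "J 1 1 = 2" using J_rec[of 1 0] J0 J10 m_Suc[of 0] by (simp add: m_def)
      moreover have "m 2 = 3" using m_Suc[of 0] m_Suc[of 1] by (simp add: m_def numeral_eq_Suc)
      ultimately show ?thesis using 0 by (simp add: numeral_eq_Suc)
    next
      case (Suc d)
      have i2: "m (Suc c) \<le> 2 ^ Suc c * J (Suc c) 0" using ineq0[of "Suc c"] Suc by simp
      have mm: "m (Suc c + 1) = (2 * real c + 3) * m (c + 1)" using m_Suc[of "Suc c"] by simp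
      have "2 ^ Suc c * J (Suc c) 1 = 4 * (real c + 1) * (2 ^ c * J c 1) + 2 ^ Suc c * J (Suc c) 0"
        using J_rec[of "Suc c" 0] by (simp add: algebra_simps)
      also have "\<dots> \<ge> 4 * (real c + 1) * m (c + 1) + m (Suc c)"
        using \<open>m (c + Suc 0) \<le> 2 ^ c * J c (Suc 0)\<close> i2 by (intro add_mono mult_left_mono) auto
      finally have "2 ^ Suc c * J (Suc c) 1 \<ge> 4 * (real c + 1) * m (c + 1) + m (Suc c)" .
      then show ?thesis using mm m_nonneg[of "c+1"]
        by simp (smt (verit, best) mult_right_mono of_nat_0_le_iff)
    qed
  qed
next
  case (Suc b)
  note IHb = Suc.IH
  show ?case
  proof (induction a)
    case 0 then show ?case using J0 by simp
  next
    case (Suc c)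
    have mm: "m (Suc c + Suc (Suc b)) = (2 * real c + 2 * real b + 5) * m (c + Suc (Suc b))"
      using m_Suc[of "c + Suc (Suc b)"] by (simp add: algebra_simps)
    have "2 ^ Suc c * J (Suc c) (Suc (Suc b)) = 4 * (real c + 1) * (2 ^ c * J c (Suc (Suc b)))
        + (2 * real b + 3) * (2 ^ Suc c * J (Suc c) (Suc b))"
      using J_rec[of "Suc c" "Suc b"] by (simp add: algebra_simps)
    also have "\<dots> \<ge> 4 * (real c + 1) * m (c + Suc (Suc b)) + (2 * real b + 3) * m (Suc c + Suc b)"
      using Suc.IH IHb[of "Suc c"] by (intro add_mono mult_left_mono) auto
    finally have "2 ^ Suc c * J (Suc c) (Suc (Suc b)) \<ge> (4 * (real c + 1) + (2 * real b + 3)) * m (c + Suc (Suc b))"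
      by (simp add: algebra_simps)
    then show ?case using mm m_nonneg[of "c + Suc (Suc b)"]
      by simp (smt (verit, best) mult_right_mono of_nat_0_le_iff)
  qed
qed

theorem lemmaC1:
  shows "I_gauss 0 0 = 1 \<and> I_gauss 1 0 = 0
    \<and> (\<forall>b. I_gauss 0 b = real (dfact (2 * b - 1)))
    \<and> (\<forall>a\<ge>2. I_gauss a 0 = 2 * (real a - 1) * (I_gauss (a - 1) 0 + I_gauss (a - 2) 0))
    \<and> (\<forall>a\<ge>1. \<forall>b\<ge>1. I_gauss a b = 2 * real a * I_gauss (a - 1) b + (2 * real b - 1) * I_gauss a (b - 1))
    \<and> (\<forall>a b. (b = 0 \<and> a \<ge> 2) \<or> b \<ge> 1 \<longrightarrow>
         gauss_expect (\<lambda>g. g ^ (2 * a + 2 * b)) \<le> 2 ^ a * I_gauss a b)"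
proof (intro conjI allI impI)
  show "I_gauss 0 0 = 1" using J00 I_J by simp
  show "I_gauss 1 0 = 0" using J10 I_J by simp
  show "I_gauss 0 b = real (dfact (2 * b - 1))" for b using I_J J0 m_dfact by simp
  show "I_gauss a 0 = 2 * (real a - 1) * (I_gauss (a - 1) 0 + I_gauss (a - 2) 0)" if "a \<ge> 2" for a
  proof -
    obtain c where a: "a = Suc (Suc c)" using \<open>a \<ge> 2\<close> by (metis add_2_eq_Suc le_Suc_ex)
    show ?thesis using J_rec0[of c] a by (simp add: I_J algebra_simps)
  qed
  show "I_gauss a b = 2 * real a * I_gauss (a - 1) b + (2 * real b - 1) * I_gauss a (b - 1)"
    if "a \<ge> 1" "b \<ge> 1" for a b
  proof -
    obtain c where b: "b = Suc c" using \<open>b \<ge> 1\<close> by (metis Suc_le_D One_nat_def)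
    show ?thesis using J_rec[of a c] b by (simp add: I_J algebra_simps)
  qed
  show "gauss_expect (\<lambda>g. g ^ (2 * a + 2 * b)) \<le> 2 ^ a * I_gauss a b"
    if "(b = 0 \<and> a \<ge> 2) \<or> b \<ge> 1" for a b
  proof -
    have "gauss_expect (\<lambda>g. g ^ (2 * a + 2 * b)) = m (a + b)"
      using ge_moment[of "a + b"] by (simp add: m_def algebra_simps)
    moreover have "m (a + b) \<le> 2 ^ a * J a b"
    proof (cases "b = 0")
      case True then show ?thesis using that ineq0[of a] by simp
    next
      case False
      then obtain c where "b = Suc c" using not0_implies_Suc by blast
      then show ?thesis using ineq1[of a c] by simp
    qed
    ultimately show ?thesis by (simp add: I_J)
  qed
qed

end
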